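(* Let $n \ge 1$, $1 \le i \le n+1$ and $k \ge 0$ be integers. The number of rooted trees on the vertex set $[n+1]=\{1,\ldots,n+1\}$ whose root is $i$ and in which exactly $k$ children of the root are smaller than $i$ equals (as an identity of rational numbers) $$\binom{i-1}{k}\,\big[(k+1)(n+1)-i\big]\,n^{\,i-k-2}\,(n+1)^{\,n-i}.$$
   Context: A rooted tree on a vertex set $V$ is a tree with vertex set $V$ together with a distinguished vertex (the root); the children of the root are the vertices adjacent to it. Vertices are compared by their integer labels. Exponents may be negative, in which case the powers are interpreted as rational numbers. *)

theory Defs
  imports Complex_Main
begin

definition simple_graph :: "'a set \<Rightarrow> 'a set set \<Rightarrow> bool" where
  "simple_graph V E \<longleftrightarrow> E \<subseteq> {{u, v} | u v. u \<in> V \<and> v \<in> V \<and> u \<noteq> v}"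

definition graph_connected :: "'a set \<Rightarrow> 'a set set \<Rightarrow> bool" where
  "graph_connected V E \<longleftrightarrow>
     (\<forall>u\<in>V. \<forall>v\<in>V. (u, v) \<in> {(x, y). {x, y} \<in> E}\<^sup>*)"

definition has_cycle :: "'a set set \<Rightarrow> bool" where
  "has_cycle E \<longleftrightarrow> (\<exists>cs. length cs \<ge> 3 \<and> distinct cs \<and>
      (\<forall>j < length cs. {cs ! j, cs ! ((j + 1) mod length cs)} \<in> E))"

definition is_tree :: "'a set \<Rightarrow> 'a set set \<Rightarrow> bool" where
  "is_tree V E \<longleftrightarrow> simple_graph V E \<and> graph_connected V E \<and> \<not> has_cycle E"

definition root_children :: "'a set set \<Rightarrow> 'a \<Rightarrow> 'a set" where
  "root_children E r = {v. {r, v} \<in> E}"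

end

theory Submission
  imports Defs "HOL-Library.Transitive_Closure_Table"
begin


definition conn :: "'a set set \<Rightarrow> ('a \<times> 'a) set" where
  "conn E = {(x, y). {x, y} \<in> E}\<^sup>*"

definition forest :: "'a set \<Rightarrow> 'a set set \<Rightarrow> 'a set \<Rightarrow> bool" where
  "forest V E R \<longleftrightarrow> simple_graph V E \<and> \<not> has_cycle E \<and> R \<subseteq> V \<and>
     (\<forall>v\<in>V. \<exists>!\<rho>. \<rho> \<in> R \<and> (v, \<rho>) \<in> conn E)"

lemma conn_refl[simp]: "(x, x) \<in> conn E"
  by (simp add: conn_def)

lemma conn_edge: "{x, y} \<in> E \<Longrightarrow> (x, y) \<in> conn E"
  by (auto simp: conn_def)

lemma conn_sym: "(x, y) \<in> conn E \<Longrightarrow> (y, x) \<in> conn E"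
proof -
  assume "(x, y) \<in> conn E"
  then have "(y, x) \<in> ({(x, y). {x, y} \<in> E}\<inverse>)\<^sup>*"
    by (simp add: conn_def rtrancl_converseI)
  moreover have "{(x, y). {x, y} \<in> E}\<inverse> = {(x, y). {x, y} \<in> E}"
    by (auto simp: insert_commute)
  ultimately show ?thesis by (simp add: conn_def)
qed

lemma conn_trans: "(x, y) \<in> conn E \<Longrightarrow> (y, z) \<in> conn E \<Longrightarrow> (x, z) \<in> conn E"
  by (auto simp: conn_def)

lemma conn_mono: "E \<subseteq> F \<Longrightarrow> (x, y) \<in> conn E \<Longrightarrow> (x, y) \<in> conn F"
proof -
  assume "E \<subseteq> F" "(x, y) \<in> conn E"
  moreover have "{(x, y). {x, y} \<in> E} \<subseteq> {(x, y). {x, y} \<in> F}" using \<open>E \<subseteq> F\<close> by auto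
  ultimately show ?thesis unfolding conn_def using rtrancl_mono by blast
qed

lemma conn_avoid: "\<forall>e\<in>F. r \<notin> e \<Longrightarrow> (v, r) \<in> conn F \<Longrightarrow> v = r"
  unfolding conn_def
  by (erule rtranclE) auto

lemma conn_split:
  assumes H: "\<And>y. {r, y} \<in> E \<Longrightarrow> y \<in> J"
    and xz: "(x, z) \<in> conn E" and xr: "x \<noteq> r"
  shows "(x, z) \<in> conn {e\<in>E. r \<notin> e} \<or> (\<exists>j\<in>J. (x, j) \<in> conn {e\<in>E. r \<notin> e})"
  using xz[unfolded conn_def]
proof (induction rule: rtrancl_induct)
  case base
  then show ?case by simp
next
  case (step y z)
  have yz: "{y, z} \<in> E" using step(2) by simp
  show ?case
  proof (cases "(x, y) \<in> conn {e \<in> E. r \<notin> e}")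
    case False
    then show ?thesis using step.IH by simp
  next
    case a: True
    show ?thesis
    proof (cases "r = y")
      case True
      have "\<forall>e\<in>{e \<in> E. r \<notin> e}. r \<notin> e" by simp
      from conn_avoid[OF this] a True have "x = r" by simp
      with xr show ?thesis by simp
    next
      case ry: False
      show ?thesis
      proof (cases "r = z")
        case True
        then have "{r, y} \<in> E" using yz by (simp add: insert_commute)
        then have "y \<in> J" by (rule H)
        then show ?thesis using a by (intro disjI2 bexI[of _ y])
      next
        case False
        then have "{y, z} \<in> {e\<in>E. r \<notin> e}" using yz ry by simp
        then have "(y, z) \<in> conn {e\<in>E. r \<notin> e}" by (rule conn_edge)
        with a have "(x, z) \<in> conn {e\<in>E. r \<notin> e}" by (rule conn_trans)
        then show ?thesis by (rule disjI1)
      qed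
    qed
  qed
qed

lemma simple_edge:
  assumes "simple_graph V E" "{a, b} \<in> E"
  shows "a \<in> V \<and> b \<in> V \<and> a \<noteq> b"
proof -
  obtain u v where "{a, b} = {u, v}" "u \<in> V" "v \<in> V" "u \<noteq> v"
    using assms unfolding simple_graph_def by blast
  then show ?thesis by (auto simp: doubleton_eq_iff)
qed

lemma simple_edge_form:
  assumes "simple_graph V E" "e \<in> E"
  shows "\<exists>a b. e = {a, b} \<and> a \<in> V \<and> b \<in> V \<and> a \<noteq> b"
  using assms unfolding simple_graph_def by blast

lemma conn_path:
  assumes "(a, b) \<in> conn F"
  shows "\<exists>xs. distinct (a # xs) \<and> last (a # xs) = b \<and>
           (\<forall>j<length xs. {(a # xs) ! j, xs ! j} \<in> F)"
proof -
  have "(\<lambda>x y. (x, y) \<in> {(x, y). {x, y} \<in> F})\<^sup>*\<^sup>* a b"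
    using assms unfolding conn_def by (simp add: rtranclp_rtrancl_eq)
  then obtain xs where "rtrancl_path (\<lambda>x y. (x, y) \<in> {(x, y). {x, y} \<in> F}) a xs b"
    using rtranclp_eq_rtrancl_path by metis
  then obtain ys where p: "rtrancl_path (\<lambda>x y. (x, y) \<in> {(x, y). {x, y} \<in> F}) a ys b"
    and d: "distinct (a # ys)"
    using rtrancl_path_distinct by metis
  have "last (a # ys) = b"
  proof (cases "ys = []")
    case True
    then show ?thesis using p by (auto elim: rtrancl_path.cases)
  next
    case False
    then show ?thesis using rtrancl_path_last[OF p] by simp
  qed
  moreover have "\<forall>j<length ys. {(a # ys) ! j, ys ! j} \<in> F"
    using rtrancl_path_nth[OF p] by auto
  ultimately show ?thesis using d by blast
qed

lemma path_conn:
  "\<forall>j<length xs. {(a # xs) ! j, xs ! j} \<in> F \<Longrightarrow> (a, last (a # xs)) \<in> conn F"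
proof (induction xs arbitrary: a)
  case Nil
  then show ?case by simp
next
  case (Cons x xs)
  have "{a, x} \<in> F" using Cons.prems by force
  moreover have "\<forall>j<length xs. {(x # xs) ! j, xs ! j} \<in> F"
    using Cons.prems by force
  then have "(x, last (x # xs)) \<in> conn F" by (rule Cons.IH)
  with conn_edge[OF \<open>{a, x} \<in> F\<close>] have "(a, last (x # xs)) \<in> conn F"
    by (rule conn_trans)
  then show ?case by simp
qed


lemma has_cycle_mono: "E' \<subseteq> E \<Longrightarrow> has_cycle E' \<Longrightarrow> has_cycle E"
  unfolding has_cycle_def by blast

lemma cycle_from_path:
  assumes ra: "{r, a} \<in> E" and rb: "{r, b} \<in> E" and ab: "a \<noteq> b"
    and abF: "(a, b) \<in> conn F" and FE: "F \<subseteq> E" and Fr: "\<forall>e\<in>F. r \<notin> e" and ar: "a \<noteq> r"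
  shows "has_cycle E"
proof -
  obtain xs where d: "distinct (a # xs)" and l: "last (a # xs) = b"
    and p: "\<forall>j<length xs. {(a # xs) ! j, xs ! j} \<in> F"
    using conn_path[OF abF] by blast
  have xsne: "xs \<noteq> []" using l ab by auto
  have rxs: "r \<notin> set xs"
  proof
    assume "r \<in> set xs"
    then obtain j where j: "j < length xs" "xs ! j = r" by (auto simp: in_set_conv_nth)
    then have "{(a # xs) ! j, xs ! j} \<in> F" using p by blast
    with Fr j show False by auto
  qed
  define cs where "cs = r # a # xs"
  have L: "length cs = length xs + 2" by (simp add: cs_def)
  have "length cs \<ge> 3" using xsne L by (cases xs) auto
  moreover have "distinct cs" using d rxs ar by (simp add: cs_def)
  moreover have "\<forall>j<length cs. {cs ! j, cs ! ((j + 1) mod length cs)} \<in> E"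
  proof (intro allI impI)
    fix j assume j: "j < length cs"
    consider "j = 0" | "0 < j \<and> j \<le> length xs" | "j = length xs + 1"
      using j L by linarith
    then show "{cs ! j, cs ! ((j + 1) mod length cs)} \<in> E"
    proof cases
      case 1
      have "(j + 1) mod length cs = 1" using 1 L xsne by (cases xs) auto
      then show ?thesis using 1 ra by (simp add: cs_def)
    next
      case 2
      then obtain t where t: "j = Suc t" "t < length xs" by (cases j) auto
      have "(j + 1) mod length cs = j + 1" using t L by simp
      moreover have "cs ! j = (a # xs) ! t" using t by (simp add: cs_def)
      moreover have "cs ! (j + 1) = xs ! t" using t by (simp add: cs_def)
      ultimately show ?thesis using p t FE by auto
    next
      case 3
      have "(j + 1) mod length cs = 0" using 3 L by simp
      moreover have "cs ! j = (a # xs) ! length xs" using 3 by (simp add: cs_def)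
      moreover have "(a # xs) ! length xs = b" using l xsne by (simp add: last_conv_nth nth_Cons')
      ultimately show ?thesis using rb by (simp add: cs_def insert_commute)
    qed
  qed
  ultimately show ?thesis unfolding has_cycle_def by blast
qed

lemma rotate_cycle:
  assumes "length cs \<ge> 3" "distinct cs"
    and e: "\<forall>j<length cs. {cs ! j, cs ! ((j + 1) mod length cs)} \<in> E" and "r \<in> set cs"
  shows "\<exists>ys. length ys \<ge> 3 \<and> distinct ys \<and>
           (\<forall>j<length ys. {ys ! j, ys ! ((j + 1) mod length ys)} \<in> E) \<and> ys ! 0 = r"
proof -
  obtain p where p: "p < length cs" "cs ! p = r" using assms(4) by (auto simp: in_set_conv_nth)
  define ys where "ys = rotate p cs"
  define L where "L = length cs"
  have Lys: "length ys = L" by (simp add: ys_def L_def)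
  have L0: "L > 0" using assms(1) L_def by linarith
  have nth: "ys ! j = cs ! ((p + j) mod L)" if "j < L" for j
    using that by (simp add: ys_def L_def nth_rotate)
  have "\<forall>j<length ys. {ys ! j, ys ! ((j + 1) mod length ys)} \<in> E"
  proof (intro allI impI)
    fix j assume j: "j < length ys"
    have a: "ys ! j = cs ! ((p + j) mod L)" using j Lys nth by simp
    have "ys ! ((j + 1) mod L) = cs ! ((p + (j + 1) mod L) mod L)"
      using nth L0 by simp
    also have "(p + (j + 1) mod L) mod L = ((p + j) mod L + 1) mod L"
      by (simp add: mod_simps add.assoc)
    finally have b: "ys ! ((j + 1) mod L) = cs ! (((p + j) mod L + 1) mod L)" .
    have "(p + j) mod L < length cs" using L0 L_def by simp
    then show "{ys ! j, ys ! ((j + 1) mod length ys)} \<in> E"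
      using e a b Lys L_def by simp
  qed
  moreover have "ys ! 0 = r" using nth[of 0] L0 p L_def by simp
  moreover have "length ys \<ge> 3" "distinct ys" using assms Lys L_def by (auto simp: ys_def)
  ultimately show ?thesis by blast
qed


lemma ex1_from: "(\<exists>x. P x) \<Longrightarrow> (\<And>x y. P x \<Longrightarrow> P y \<Longrightarrow> x = y) \<Longrightarrow> \<exists>!x. P x"
  by blast

lemma forest_remove:
  assumes F: "forest V E R" and r: "r \<in> R"
  shows "{v. {r, v} \<in> E} \<subseteq> V - R"
    and "forest (V - {r}) {e\<in>E. r \<notin> e} ((R - {r}) \<union> {v. {r, v} \<in> E})"
proof -
  define J where "J = {v. {r, v} \<in> E}"
  define E' where "E' = {e\<in>E. r \<notin> e}"
  have sg: "simple_graph V E" and acyc: "\<not> has_cycle E" and RV: "R \<subseteq> V"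
    and U: "\<forall>v\<in>V. \<exists>!\<rho>. \<rho> \<in> R \<and> (v, \<rho>) \<in> conn E"
    using F unfolding forest_def by auto
  have rV: "r \<in> V" using r RV by auto
  have Uu: "\<rho>1 = \<rho>2" if "v \<in> V" "\<rho>1 \<in> R" "\<rho>2 \<in> R" "(v, \<rho>1) \<in> conn E" "(v, \<rho>2) \<in> conn E"
    for v \<rho>1 \<rho>2 using U that by blast
  have jr: "(j, r) \<in> conn E" if "j \<in> J" for j
    using that conn_sym[OF conn_edge[of r j E]] by (auto simp: J_def)
  have JV: "J \<subseteq> V - R"
  proof
    fix j assume j: "j \<in> J"
    then have "{r, j} \<in> E" by (simp add: J_def)
    then have jV: "j \<in> V" and jr': "r \<noteq> j" using simple_edge[OF sg] by auto
    have "j \<notin> R"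
    proof
      assume "j \<in> R"
      then have "j = r" using Uu[OF jV \<open>j \<in> R\<close> r conn_refl jr[OF j]] by simp
      with jr' show False by simp
    qed
    with jV show "j \<in> V - R" by simp
  qed
  then show "{v. {r, v} \<in> E} \<subseteq> V - R" by (simp add: J_def)
  have E'E: "E' \<subseteq> E" by (auto simp: E'_def)
  have E'r: "\<forall>e\<in>E'. r \<notin> e" by (simp add: E'_def)
  have sg': "simple_graph (V - {r}) E'"
    unfolding simple_graph_def
  proof
    fix e assume "e \<in> E'"
    then have "e \<in> E" "r \<notin> e" by (auto simp: E'_def)
    then obtain a b where "e = {a, b}" "a \<in> V" "b \<in> V" "a \<noteq> b"
      using simple_edge_form[OF sg] by blast
    with \<open>r \<notin> e\<close> show "e \<in> {{u, v} |u v. u \<in> V - {r} \<and> v \<in> V - {r} \<and> u \<noteq> v}" by auto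
  qed
  have acyc': "\<not> has_cycle E'" using acyc has_cycle_mono[OF E'E] by blast
  have H: "\<And>y. {r, y} \<in> E \<Longrightarrow> y \<in> J" by (simp add: J_def)
  have R'V: "(R - {r}) \<union> J \<subseteq> V - {r}" using RV JV r by auto
  have helper: "\<rho>1 = \<rho>2" if "\<rho>1 \<in> R - {r}" "\<rho>2 \<in> (R - {r}) \<union> J" "(\<rho>1, \<rho>2) \<in> conn E'"
    for \<rho>1 \<rho>2
  proof -
    have c: "(\<rho>1, \<rho>2) \<in> conn E" using conn_mono[OF E'E] that(3) .
    have v1: "\<rho>1 \<in> V" using that(1) RV by auto
    from that(2) show ?thesis
    proof
      assume "\<rho>2 \<in> R - {r}"
      then show ?thesis using Uu[OF v1 _ _ conn_refl c] that(1) by auto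
    next
      assume "\<rho>2 \<in> J"
      then have "(\<rho>1, r) \<in> conn E" using conn_trans[OF c jr] by simp
      then have "\<rho>1 = r" using Uu[OF v1 _ r conn_refl] that(1) by auto
      with that(1) show ?thesis by simp
    qed
  qed
  have U': "\<exists>!\<rho>. \<rho> \<in> (R - {r}) \<union> J \<and> (v, \<rho>) \<in> conn E'" if v: "v \<in> V - {r}" for v
  proof (rule ex1_from)
    obtain \<rho> where \<rho>: "\<rho> \<in> R" "(v, \<rho>) \<in> conn E" using U v by blast
    have vr: "v \<noteq> r" using v by simp
    show "\<exists>\<rho>. \<rho> \<in> (R - {r}) \<union> J \<and> (v, \<rho>) \<in> conn E'"
    proof (cases "\<rho> = r")
      case True
      from conn_split[OF H \<rho>(2) vr] show ?thesis
      proof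
        assume "(v, \<rho>) \<in> conn {e \<in> E. r \<notin> e}"
        then have "v = r" using conn_avoid[of "{e \<in> E. r \<notin> e}" r v] True by auto
        with vr show ?thesis by simp
      next
        assume "\<exists>j\<in>J. (v, j) \<in> conn {e \<in> E. r \<notin> e}"
        then show ?thesis by (auto simp: E'_def)
      qed
    next
      case False
      from conn_split[OF H \<rho>(2) vr] show ?thesis
      proof
        assume "(v, \<rho>) \<in> conn {e \<in> E. r \<notin> e}"
        then show ?thesis using False \<rho>(1) by (auto simp: E'_def)
      next
        assume "\<exists>j\<in>J. (v, j) \<in> conn {e \<in> E. r \<notin> e}"
        then obtain j where j: "j \<in> J" "(v, j) \<in> conn E'" by (auto simp: E'_def)
        have "(v, r) \<in> conn E" using conn_trans[OF conn_mono[OF E'E j(2)] jr[OF j(1)]] .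
        then have "\<rho> = r" using Uu[OF _ \<rho>(1) r \<rho>(2)] v by auto
        with False show ?thesis by simp
      qed
    qed
  next
    fix \<rho>1 \<rho>2
    assume a1: "\<rho>1 \<in> (R - {r}) \<union> J \<and> (v, \<rho>1) \<in> conn E'"
      and a2: "\<rho>2 \<in> (R - {r}) \<union> J \<and> (v, \<rho>2) \<in> conn E'"
    have c12: "(\<rho>1, \<rho>2) \<in> conn E'" using conn_trans[OF conn_sym[of v \<rho>1 E'], of \<rho>2] a1 a2 by simp
    have c21: "(\<rho>2, \<rho>1) \<in> conn E'" using c12 by (rule conn_sym)
    show "\<rho>1 = \<rho>2"
    proof (cases "\<rho>1 \<in> R - {r}")
      case True
      then show ?thesis using helper[OF True _ c12] a2 by simp
    next
      case f1: False
      show ?thesis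
      proof (cases "\<rho>2 \<in> R - {r}")
        case True
        then show ?thesis using helper[OF True _ c21] a1 by simp
      next
        case False
        then have j1: "\<rho>1 \<in> J" and j2: "\<rho>2 \<in> J" using a1 a2 f1 by auto
        show ?thesis
        proof (rule ccontr)
          assume ne: "\<rho>1 \<noteq> \<rho>2"
          have "\<rho>1 \<noteq> r" using j1 JV r by auto
          have "has_cycle E"
            by (rule cycle_from_path[OF _ _ ne c12 E'E E'r \<open>\<rho>1 \<noteq> r\<close>])
               (use j1 j2 in \<open>auto simp: J_def\<close>)
          with acyc show False by simp
        qed
      qed
    qed
  qed
  show "forest (V - {r}) {e\<in>E. r \<notin> e} ((R - {r}) \<union> {v. {r, v} \<in> E})"
    unfolding forest_def E'_def[symmetric] J_def[symmetric]
    using sg' acyc' R'V U' by simp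
qed


lemma forest_add:
  assumes r: "r \<in> R" and RV: "R \<subseteq> V" and JV: "J \<subseteq> V - R"
    and F': "forest (V - {r}) E' ((R - {r}) \<union> J)"
  shows "forest V (E' \<union> (\<lambda>j. {r, j}) ` J) R"
proof -
  define E where "E = E' \<union> (\<lambda>j. {r, j}) ` J"
  have sg': "simple_graph (V - {r}) E'" and acyc': "\<not> has_cycle E'"
    and U': "\<forall>v\<in>V - {r}. \<exists>!\<rho>. \<rho> \<in> (R - {r}) \<union> J \<and> (v, \<rho>) \<in> conn E'"
    using F' unfolding forest_def by auto
  have U'u: "\<rho>1 = \<rho>2" if "v \<in> V - {r}" "\<rho>1 \<in> (R - {r}) \<union> J" "\<rho>2 \<in> (R - {r}) \<union> J"
    "(v, \<rho>1) \<in> conn E'" "(v, \<rho>2) \<in> conn E'" for v \<rho>1 \<rho>2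
    using U' that by blast
  have E'r: "\<forall>e\<in>E'. r \<notin> e"
  proof
    fix e assume "e \<in> E'"
    then obtain a b where "e = {a, b}" "a \<in> V - {r}" "b \<in> V - {r}"
      using simple_edge_form[OF sg'] by blast
    then show "r \<notin> e" by auto
  qed
  have E'E: "E' \<subseteq> E" by (auto simp: E_def)
  have rV: "r \<in> V" using r RV by auto
  have jr0: "j \<noteq> r" if "j \<in> J" for j using that JV r by auto
  have sg: "simple_graph V E"
    unfolding simple_graph_def
  proof
    fix e assume "e \<in> E"
    then consider "e \<in> E'" | j where "j \<in> J" "e = {r, j}" by (auto simp: E_def)
    then show "e \<in> {{u, v} |u v. u \<in> V \<and> v \<in> V \<and> u \<noteq> v}"
    proof cases
      case 1
      then obtain a b where "e = {a, b}" "a \<in> V - {r}" "b \<in> V - {r}" "a \<noteq> b"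
        using simple_edge_form[OF sg'] by blast
      then show ?thesis by auto
    next
      case 2
      then show ?thesis using rV JV jr0[OF 2(1)] by auto
    qed
  qed
  have H: "y \<in> J" if ry: "{r, y} \<in> E" for y
  proof -
    have "{r, y} \<notin> E'" using E'r by auto
    then obtain j where "j \<in> J" "{r, y} = {r, j}" using ry by (auto simp: E_def)
    then show ?thesis using jr0 by (auto simp: doubleton_eq_iff)
  qed
  have inE': "e \<in> E'" if "e \<in> E" "r \<notin> e" for e
    using that by (auto simp: E_def)
  have Esplit: "{e\<in>E. r \<notin> e} = E'" using E'r inE' E'E by blast
  have jr: "(j, r) \<in> conn E" if "j \<in> J" for j
  proof -
    have "{r, j} \<in> E" using that by (auto simp: E_def)
    then show ?thesis by (rule conn_sym[OF conn_edge])
  qed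
  have helper: "\<rho>1 = \<rho>2" if a: "\<rho>1 \<noteq> r" "\<rho>1 \<in> R" "\<rho>2 \<in> R" "(\<rho>1, \<rho>2) \<in> conn E" for \<rho>1 \<rho>2
  proof -
    have v1: "\<rho>1 \<in> V - {r}" using a RV by auto
    have r1: "\<rho>1 \<in> (R - {r}) \<union> J" using a by auto
    from conn_split[OF H a(4) a(1)] Esplit
    have "(\<rho>1, \<rho>2) \<in> conn E' \<or> (\<exists>j\<in>J. (\<rho>1, j) \<in> conn E')" by simp
    then show ?thesis
    proof
      assume c: "(\<rho>1, \<rho>2) \<in> conn E'"
      show ?thesis
      proof (cases "\<rho>2 = r")
        case True
        then have "\<rho>1 = r" using conn_avoid[OF E'r] c by simp
        with a show ?thesis by simp
      next
        case False
        then have "\<rho>2 \<in> (R - {r}) \<union> J" using a by auto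
        then show ?thesis using U'u[OF v1 r1 _ conn_refl c] by simp
      qed
    next
      assume "\<exists>j\<in>J. (\<rho>1, j) \<in> conn E'"
      then obtain j where j: "j \<in> J" "(\<rho>1, j) \<in> conn E'" by blast
      then have "\<rho>1 = j" using U'u[OF v1 r1 _ conn_refl j(2)] by simp
      with j(1) JV a(2) show ?thesis by auto
    qed
  qed
  have U: "\<exists>!\<rho>. \<rho> \<in> R \<and> (v, \<rho>) \<in> conn E" if v: "v \<in> V" for v
  proof (rule ex1_from)
    show "\<exists>\<rho>. \<rho> \<in> R \<and> (v, \<rho>) \<in> conn E"
    proof (cases "v = r")
      case True
      then show ?thesis using r by auto
    next
      case False
      then obtain \<rho> where \<rho>: "\<rho> \<in> (R - {r}) \<union> J" "(v, \<rho>) \<in> conn E'"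
        using U' v by blast
      have c: "(v, \<rho>) \<in> conn E" using conn_mono[OF E'E \<rho>(2)] .
      from \<rho>(1) show ?thesis
      proof
        assume "\<rho> \<in> R - {r}"
        then show ?thesis using c by auto
      next
        assume "\<rho> \<in> J"
        then have "(v, r) \<in> conn E" using conn_trans[OF c jr] by simp
        then show ?thesis using r by auto
      qed
    qed
  next
    fix \<rho>1 \<rho>2
    assume a1: "\<rho>1 \<in> R \<and> (v, \<rho>1) \<in> conn E" and a2: "\<rho>2 \<in> R \<and> (v, \<rho>2) \<in> conn E"
    have c12: "(\<rho>1, \<rho>2) \<in> conn E" using conn_trans[OF conn_sym[of v \<rho>1 E], of \<rho>2] a1 a2 by simp
    have c21: "(\<rho>2, \<rho>1) \<in> conn E" using c12 by (rule conn_sym)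
    show "\<rho>1 = \<rho>2"
    proof (cases "\<rho>1 = r")
      case False
      then show ?thesis using helper[OF False _ _ c12] a1 a2 by simp
    next
      case True
      show ?thesis
      proof (cases "\<rho>2 = r")
        case True
        then show ?thesis using \<open>\<rho>1 = r\<close> by simp
      next
        case False
        then show ?thesis using helper[OF False _ _ c21] a1 a2 by simp
      qed
    qed
  qed
  have acyc: "\<not> has_cycle E"
  proof
    assume "has_cycle E"
    then obtain cs where cs: "length cs \<ge> 3" "distinct cs"
      "\<forall>j<length cs. {cs ! j, cs ! ((j + 1) mod length cs)} \<in> E"
      unfolding has_cycle_def by blast
    show False
    proof (cases "r \<in> set cs")
      case False
      have "\<forall>j<length cs. {cs ! j, cs ! ((j + 1) mod length cs)} \<in> E'"
      proof (intro allI impI)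
        fix j assume j: "j < length cs"
        have k: "(j + 1) mod length cs < length cs" using j by (intro mod_less_divisor) linarith
        have "r \<notin> {cs ! j, cs ! ((j + 1) mod length cs)}"
          using False nth_mem[OF j] nth_mem[OF k] by auto
        then show "{cs ! j, cs ! ((j + 1) mod length cs)} \<in> E'"
          using inE' cs(3) j by blast
      qed
      then have "has_cycle E'" using cs(1,2) unfolding has_cycle_def by blast
      with acyc' show False by simp
    next
      case True
      obtain ys where ys: "length ys \<ge> 3" "distinct ys"
        "\<forall>j<length ys. {ys ! j, ys ! ((j + 1) mod length ys)} \<in> E" "ys ! 0 = r"
        using rotate_cycle[OF cs True] by blast
      define L where "L = length ys"
      have L3: "L \<ge> 3" using ys(1) L_def by simp
      define a where "a = ys ! 1"
      define b where "b = ys ! (L - 1)"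
      have "0 < length ys" using L3 L_def by arith
      then have e0: "{ys ! 0, ys ! ((0 + 1) mod length ys)} \<in> E" using ys(3) by blast
      have "(0 + 1) mod length ys = 1" using L3 L_def by simp
      with e0 have "{r, a} \<in> E" using ys(4) by (simp add: a_def)
      then have aJ: "a \<in> J" by (rule H)
      have "L - 1 < length ys" using L3 L_def by arith
      then have e1: "{ys ! (L - 1), ys ! ((L - 1 + 1) mod length ys)} \<in> E" using ys(3) by blast
      have "L - 1 + 1 = length ys" using L3 L_def by arith
      then have "(L - 1 + 1) mod length ys = 0" by simp
      with e1 have "{b, r} \<in> E" using ys(4) by (simp add: b_def)
      then have "{r, b} \<in> E" by (simp add: insert_commute)
      then have bJ: "b \<in> J" by (rule H)
      have ab: "a \<noteq> b"
        unfolding a_def b_def using ys(2) L3 L_def by (simp add: nth_eq_iff_index_eq)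
      define zs where "zs = drop 2 ys"
      have az: "a # zs = drop 1 ys"
        unfolding a_def zs_def using Cons_nth_drop_Suc[of 1 ys] L3 L_def by (simp add: numeral_2_eq_2)
      have lz: "length zs = L - 2" by (simp add: zs_def L_def)
      have path: "\<forall>t<length zs. {(a # zs) ! t, zs ! t} \<in> E'"
      proof (intro allI impI)
        fix t assume t: "t < length zs"
        have e1: "(a # zs) ! t = ys ! (t + 1)" using az t lz L_def by simp
        have e2: "zs ! t = ys ! (t + 2)" using t lz L_def by (simp add: zs_def add.commute)
        have tL: "t + 1 < L" "t + 2 < L" using t lz L3 by auto
        have "{ys ! (t + 1), ys ! ((t + 1 + 1) mod L)} \<in> E" using ys(3) tL L_def by blast
        moreover have "(t + 1 + 1) mod L = t + 2" using tL by simp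
        ultimately have inE: "{ys ! (t + 1), ys ! (t + 2)} \<in> E" by simp
        have l0: "0 < length ys" and l1: "t + 1 < length ys" and l2: "t + 2 < length ys"
          using tL L_def by arith+
        have "ys ! (t + 1) \<noteq> ys ! 0"
          using nth_eq_iff_index_eq[OF ys(2) l1 l0] by simp
        moreover have "ys ! (t + 2) \<noteq> ys ! 0"
          using nth_eq_iff_index_eq[OF ys(2) l2 l0] by simp
        ultimately have "r \<notin> {ys ! (t + 1), ys ! (t + 2)}" using ys(4) by auto
        then show "{(a # zs) ! t, zs ! t} \<in> E'" using inE inE' e1 e2 by simp
      qed
      have "last (a # zs) = b"
      proof -
        have "last (a # zs) = last (drop 1 ys)" using az by simp
        also have "\<dots> = last ys" using L3 L_def by (simp add: last_drop)
        also have "\<dots> = b"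
        proof -
          have "ys \<noteq> []" using L3 L_def by auto
          then show ?thesis unfolding b_def L_def by (simp add: last_conv_nth)
        qed
        finally show ?thesis .
      qed
      then have cab: "(a, b) \<in> conn E'" using path_conn[OF path] by simp
      have "a \<in> V - {r}" using aJ JV jr0 by auto
      then have "a = b" using U'u[OF _ _ _ conn_refl cab] aJ bJ by simp
      with ab show False by simp
    qed
  qed
  show ?thesis
    unfolding E_def[symmetric] forest_def using sg acyc r RV U by blast
qed


lemma finite_forests:
  assumes "finite V"
  shows "finite {E. forest V E R}"
proof (rule finite_subset)
  show "{E. forest V E R} \<subseteq> Pow (Pow V)"
  proof
    fix E assume "E \<in> {E. forest V E R}"
    then have sg: "simple_graph V E" by (simp add: forest_def)
    have "e \<subseteq> V" if "e \<in> E" for e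
      using simple_edge_form[OF sg that] by auto
    then show "E \<in> Pow (Pow V)" by auto
  qed
  show "finite (Pow (Pow V))" using assms by simp
qed

lemma avoid_of_forest:
  assumes "forest (V - {r}) E' R'"
  shows "\<forall>e\<in>E'. r \<notin> e"
proof
  fix e assume "e \<in> E'"
  then obtain a b where "e = {a, b}" "a \<in> V - {r}" "b \<in> V - {r}"
    using simple_edge_form[of "V - {r}" E' e] assms by (auto simp: forest_def)
  then show "r \<notin> e" by auto
qed

lemma card_decomp:
  assumes fin: "finite V" and r: "r \<in> R" and RV: "R \<subseteq> V"
  shows "card {E. forest V E R \<and> P {v. {r, v} \<in> E}} =
         (\<Sum>J \<in> {J. J \<subseteq> V - R \<and> P J}. card {E'. forest (V - {r}) E' ((R - {r}) \<union> J)})"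
proof -
  define A where "A = {E. forest V E R \<and> P {v. {r, v} \<in> E}}"
  define B where "B = Sigma {J. J \<subseteq> V - R \<and> P J} (\<lambda>J. {E'. forest (V - {r}) E' ((R - {r}) \<union> J)})"
  define f where "f = (\<lambda>E. ({v. {r, v} \<in> E}, {e\<in>E. r \<notin> e}))"
  define g where "g = (\<lambda>(J, E'). E' \<union> (\<lambda>j. {r, j}) ` J)"
  have "bij_betw f A B"
  proof (rule bij_betw_byWitness[where f' = g])
    show "\<forall>a\<in>A. g (f a) = a"
    proof
      fix E assume "E \<in> A"
      then have F: "forest V E R" by (simp add: A_def)
      then have sg: "simple_graph V E" by (simp add: forest_def)
      have "E = {e\<in>E. r \<notin> e} \<union> (\<lambda>j. {r, j}) ` {v. {r, v} \<in> E}"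
      proof
        show "E \<subseteq> {e\<in>E. r \<notin> e} \<union> (\<lambda>j. {r, j}) ` {v. {r, v} \<in> E}"
        proof
          fix e assume e: "e \<in> E"
          then obtain a b where ab: "e = {a, b}" using simple_edge_form[OF sg] by blast
          show "e \<in> {e\<in>E. r \<notin> e} \<union> (\<lambda>j. {r, j}) ` {v. {r, v} \<in> E}"
          proof (cases "r \<in> e")
            case True
            then have "a = r \<or> b = r" using ab by auto
            then show ?thesis
            proof
              assume "a = r"
              then show ?thesis using e ab by auto
            next
              assume "b = r"
              then have "e = {r, a}" using ab by (simp add: insert_commute)
              then show ?thesis using e by auto
            qed
          next
            case False
            then show ?thesis using e by auto
          qed
        qed
      qed auto
      then show "g (f E) = E" by (simp add: f_def g_def)
    qed
  next
    show "\<forall>a'\<in>B. f (g a') = a'"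
    proof
      fix x assume "x \<in> B"
      then obtain J E' where x: "x = (J, E')" "J \<subseteq> V - R"
        "forest (V - {r}) E' ((R - {r}) \<union> J)" by (auto simp: B_def)
      have Er: "\<forall>e\<in>E'. r \<notin> e" using avoid_of_forest[OF x(3)] .
      have jr: "j \<noteq> r" if "j \<in> J" for j using that x(2) r by auto
      have 1: "{v. {r, v} \<in> E' \<union> (\<lambda>j. {r, j}) ` J} = J"
      proof (intro set_eqI iffI)
        fix v assume "v \<in> {v. {r, v} \<in> E' \<union> (\<lambda>j. {r, j}) ` J}"
        then have "{r, v} \<in> (\<lambda>j. {r, j}) ` J" using Er by auto
        then obtain j where "j \<in> J" "{r, v} = {r, j}" by auto
        then show "v \<in> J" using jr by (auto simp: doubleton_eq_iff)
      qed auto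
      have 2: "{e \<in> E' \<union> (\<lambda>j. {r, j}) ` J. r \<notin> e} = E'" using Er by auto
      show "f (g x) = x" using 1 2 x(1) by (simp add: f_def g_def)
    qed
  next
    show "f ` A \<subseteq> B"
    proof
      fix y assume "y \<in> f ` A"
      then obtain E where E: "E \<in> A" "y = f E" by blast
      then have F: "forest V E R" and p: "P {v. {r, v} \<in> E}" by (auto simp: A_def)
      show "y \<in> B" using forest_remove[OF F r] p E(2) by (simp add: B_def f_def)
    qed
  next
    show "g ` B \<subseteq> A"
    proof
      fix y assume "y \<in> g ` B"
      then obtain J E' where x: "y = g (J, E')" "J \<subseteq> V - R" "P J"
        "forest (V - {r}) E' ((R - {r}) \<union> J)" by (auto simp: B_def)
      have Er: "\<forall>e\<in>E'. r \<notin> e" using avoid_of_forest[OF x(4)] .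
      have jr: "j \<noteq> r" if "j \<in> J" for j using that x(2) r by auto
      have 1: "{v. {r, v} \<in> E' \<union> (\<lambda>j. {r, j}) ` J} = J"
      proof (intro set_eqI iffI)
        fix v assume "v \<in> {v. {r, v} \<in> E' \<union> (\<lambda>j. {r, j}) ` J}"
        then have "{r, v} \<in> (\<lambda>j. {r, j}) ` J" using Er by auto
        then obtain j where "j \<in> J" "{r, v} = {r, j}" by auto
        then show "v \<in> J" using jr by (auto simp: doubleton_eq_iff)
      qed auto
      have "forest V (E' \<union> (\<lambda>j. {r, j}) ` J) R" by (rule forest_add[OF r RV x(2) x(4)])
      then show "y \<in> A" using 1 x(1,3) by (simp add: A_def g_def)
    qed
  qed
  then have "card A = card B" by (rule bij_betw_same_card)
  also have "card B = (\<Sum>J \<in> {J. J \<subseteq> V - R \<and> P J}. card {E'. forest (V - {r}) E' ((R - {r}) \<union> J)})"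
    unfolding B_def
  proof (rule card_SigmaI)
    show "finite {J. J \<subseteq> V - R \<and> P J}" using fin by simp
    show "\<forall>a\<in>{J. J \<subseteq> V - R \<and> P J}. finite {E'. forest (V - {r}) E' (R - {r} \<union> a)}"
      using fin finite_forests by blast
  qed
  finally show ?thesis by (simp add: A_def)
qed



lemma binom_sum1: "(\<Sum>j\<le>m. of_nat (m choose j) * (x::rat) ^ (m - j)) = (x + 1) ^ m"
  using binomial_ring[of 1 x m] by (simp add: add.commute)

lemma binom_sum2: "(x + 1) * (\<Sum>j\<le>m. of_nat (m choose j) * of_nat j * (x::rat) ^ (m - j))
                   = of_nat m * (x + 1) ^ m"
proof (cases m)
  case 0
  then show ?thesis by simp
next
  case (Suc m')
  have "(\<Sum>j\<le>m. of_nat (m choose j) * of_nat j * x ^ (m - j))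
        = (\<Sum>i\<le>m'. of_nat (Suc m' choose Suc i) * of_nat (Suc i) * x ^ (m' - i))"
    unfolding Suc sum.atMost_Suc_shift by simp
  also have "\<dots> = (\<Sum>i\<le>m'. of_nat (Suc m') * (of_nat (m' choose i) * x ^ (m' - i)))"
  proof (rule sum.cong[OF refl])
    fix i
    have "of_nat (Suc m' choose Suc i) * of_nat (Suc i) = (of_nat (Suc i * (Suc m' choose Suc i)) :: rat)"
      by (simp only: of_nat_mult mult.commute)
    also have "\<dots> = of_nat (Suc m' * (m' choose i))" by (simp only: Suc_times_binomial)
    finally have eq: "of_nat (Suc m' choose Suc i) * of_nat (Suc i) = (of_nat (Suc m' * (m' choose i)) :: rat)" .
    show "of_nat (Suc m' choose Suc i) * of_nat (Suc i) * x ^ (m' - i)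
        = of_nat (Suc m') * (of_nat (m' choose i) * x ^ (m' - i))"
      by (simp only: eq of_nat_mult mult.assoc)
  qed
  also have "\<dots> = of_nat (Suc m') * (x + 1) ^ m'"
    by (simp add: sum_distrib_left[symmetric] binom_sum1)
  finally show ?thesis using Suc by simp
qed

lemma binom_sumS: "(x + 1) * (\<Sum>j\<le>m. of_nat (m choose j) * (a + of_nat j) * (x::rat) ^ (m - j))
                   = (x + 1) ^ m * (a * (x + 1) + of_nat m)"
proof -
  have "(\<Sum>j\<le>m. of_nat (m choose j) * (a + of_nat j) * x ^ (m - j))
      = a * (\<Sum>j\<le>m. of_nat (m choose j) * x ^ (m - j))
        + (\<Sum>j\<le>m. of_nat (m choose j) * of_nat j * x ^ (m - j))"
    by (simp add: sum_distrib_left sum.distrib algebra_simps)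
  then have "(x + 1) * (\<Sum>j\<le>m. of_nat (m choose j) * (a + of_nat j) * x ^ (m - j))
      = (x + 1) * a * (x + 1) ^ m + of_nat m * (x + 1) ^ m"
    using binom_sum1[of m x] binom_sum2[of x m] by (simp add: algebra_simps)
  then show ?thesis by (simp add: algebra_simps)
qed


definition fcount :: "nat \<Rightarrow> nat \<Rightarrow> rat" where
  "fcount N s = (if s = 0 then (if N = 0 then 1 else 0)
                 else of_nat s * of_nat N powi (int N - int s - 1))"

lemma fcount_pos: "N \<noteq> 0 \<Longrightarrow> fcount N s = of_nat s * of_nat N powi (int N - int s - 1)"
  by (simp add: fcount_def)

lemma fcount_rec:
  assumes s1: "1 \<le> s" and sN: "s \<le> N"
  shows "(\<Sum>j\<le>N - s. of_nat (N - s choose j) * fcount (N - 1) (s - 1 + j)) = fcount N s"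
proof (cases "N = 1")
  case True
  then have "s = 1" using s1 sN by simp
  then show ?thesis using True by (simp add: fcount_def)
next
  case False
  define m where "m = N - s"
  define x :: rat where "x = of_nat (N - 1)"
  have N2: "N \<ge> 2" using False s1 sN by simp
  have x0: "x \<noteq> 0" using N2 by (simp add: x_def)
  have xN: "x + 1 = of_nat N" using N2 by (simp add: x_def of_nat_diff)
  have trm: "of_nat (m choose j) * fcount (N - 1) (s - 1 + j)
        = of_nat (m choose j) * (of_nat (s - 1) + of_nat j) * x ^ (m - j) / x" if j: "j \<le> m" for j
  proof -
    have "fcount (N - 1) (s - 1 + j) = of_nat (s - 1 + j) * x powi (int (N - 1) - int (s - 1 + j) - 1)"
      using N2 by (simp add: fcount_pos x_def)
    also have "int (N - 1) - int (s - 1 + j) - 1 = int (m - j) - 1"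
      using j s1 sN by (simp add: m_def)
    also have "x powi (int (m - j) - 1) = x ^ (m - j) / x"
      using x0 by (simp add: power_int_diff)
    finally show ?thesis by simp
  qed
  have "(\<Sum>j\<le>m. of_nat (m choose j) * fcount (N - 1) (s - 1 + j))
      = (\<Sum>j\<le>m. of_nat (m choose j) * (of_nat (s - 1) + of_nat j) * x ^ (m - j) / x)"
    by (rule sum.cong[OF refl]) (rule trm, simp)
  also have "\<dots> = (\<Sum>j\<le>m. of_nat (m choose j) * (of_nat (s - 1) + of_nat j) * x ^ (m - j)) / x"
    by (simp add: sum_divide_distrib)
  also have "\<dots> = of_nat s * of_nat N ^ m / of_nat N"
  proof -
    define S where "S = (\<Sum>j\<le>m. of_nat (m choose j) * (of_nat (s - 1) + of_nat j) * x ^ (m - j))"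
    have "(x + 1) * S = (x + 1) ^ m * (of_nat (s - 1) * (x + 1) + of_nat m)"
      unfolding S_def by (rule binom_sumS)
    moreover have "of_nat (s - 1) * (x + 1) + of_nat m = of_nat s * x"
      using s1 sN N2 by (simp add: xN m_def of_nat_diff x_def algebra_simps)
    ultimately have "of_nat N * S = of_nat N ^ m * (of_nat s * x)" using xN by simp
    then have "S = of_nat N ^ m * (of_nat s * x) / of_nat N" using N2
      by (simp add: field_simps)
    then show ?thesis using x0 by (simp add: S_def field_simps)
  qed
  also have "\<dots> = fcount N s"
  proof -
    have "int N - int s - 1 = int m - 1" using sN by (simp add: m_def)
    then have "(of_nat N :: rat) powi (int N - int s - 1) = of_nat N ^ m / of_nat N"
      using N2 by (simp add: power_int_diff)
    then show ?thesis using s1 by (simp add: fcount_def)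
  qed
  finally show ?thesis by (simp add: m_def)
qed

lemma main_alg:
  assumes n1: "n \<ge> 1" and i1: "1 \<le> i" and iN: "i \<le> n + 1"
  shows "(\<Sum>j\<le>n + 1 - i. of_nat (n + 1 - i choose j) * fcount n (k + j))
       = (of_nat ((k + 1) * (n + 1)) - of_nat i) * (of_nat n) powi (int i - int k - 2)
           * (of_nat (n + 1)) powi (int n - int i)"
proof -
  define m where "m = n + 1 - i"
  define x :: rat where "x = of_nat n"
  have x0: "x \<noteq> 0" using n1 by (simp add: x_def)
  have trm: "of_nat (m choose j) * fcount n (k + j)
        = x powi (int i - int k - 2) * (of_nat (m choose j) * (of_nat k + of_nat j) * x ^ (m - j))"
    if j: "j \<le> m" for j
  proof -
    have "fcount n (k + j) = of_nat (k + j) * x powi (int n - int (k + j) - 1)"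
      using n1 by (simp add: fcount_pos x_def)
    also have "int n - int (k + j) - 1 = (int i - int k - 2) + int (m - j)"
      using j i1 iN by (simp add: m_def)
    also have "x powi ((int i - int k - 2) + int (m - j)) = x powi (int i - int k - 2) * x ^ (m - j)"
      using x0 by (simp add: power_int_add)
    finally show ?thesis by simp
  qed
  define S where "S = (\<Sum>j\<le>m. of_nat (m choose j) * (of_nat k + of_nat j) * x ^ (m - j))"
  have "(\<Sum>j\<le>m. of_nat (m choose j) * fcount n (k + j)) = x powi (int i - int k - 2) * S"
    by (simp add: trm S_def sum_distrib_left)
  moreover have "S = (of_nat ((k + 1) * (n + 1)) - of_nat i) * (x + 1) powi (int n - int i)"
  proof -
    have a: "(x + 1) * S = (x + 1) ^ m * (of_nat k * (x + 1) + of_nat m)"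
      unfolding S_def by (rule binom_sumS)
    have b: "of_nat k * (x + 1) + of_nat m = of_nat ((k + 1) * (n + 1)) - (of_nat i :: rat)"
      using iN by (simp add: x_def m_def of_nat_diff algebra_simps)
    have x10: "x + 1 \<noteq> 0" by (simp add: x_def)
    have c: "(x + 1) ^ m = (x + 1) * (x + 1) powi (int n - int i)"
    proof -
      have "int n - int i = int m - 1" using iN by (simp add: m_def)
      then show ?thesis using x10 by (simp add: power_int_diff)
    qed
    have "(x + 1) * S = (x + 1) * ((of_nat ((k + 1) * (n + 1)) - of_nat i) * (x + 1) powi (int n - int i))"
      using a b c by (simp only: mult_ac)
    then show ?thesis using x10 by simp
  qed
  ultimately show ?thesis by (simp add: m_def x_def algebra_simps)
qed



lemma no_cycle_empty: "\<not> has_cycle ({} :: 'a set set)"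
  unfolding has_cycle_def
proof (intro notI, elim exE conjE)
  fix cs :: "'a list"
  assume c1: "3 \<le> length cs"
    and c2: "\<forall>j<length cs. {cs ! j, cs ! ((j + 1) mod length cs)} \<in> ({} :: 'a set set)"
  have "0 < length cs" using c1 by arith
  from c2[rule_format, OF this] show False by simp
qed

lemma forest_empty_roots:
  assumes "finite V"
  shows "card {E. forest V E {}} = (if V = {} then 1 else 0)"
proof (cases "V = {}")
  case True
  have "{E. forest V E {}} = {{}}"
  proof (intro set_eqI iffI)
    fix E :: "'a set set" assume "E \<in> {E. forest V E {}}"
    then have "simple_graph {} E" using True by (simp add: forest_def)
    then show "E \<in> {{}}" by (auto simp: simple_graph_def)
  next
    fix E :: "'a set set" assume "E \<in> {{}}"
    then show "E \<in> {E. forest V E {}}" using True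
      by (simp add: forest_def simple_graph_def no_cycle_empty)
  qed
  then show ?thesis using True by simp
next
  case False
  then have "{E. forest V E {}} = {}" by (auto simp: forest_def)
  then show ?thesis using False by simp
qed

lemma sum_pow_card:
  fixes h :: "nat \<Rightarrow> rat"
  assumes fin: "finite A"
  shows "(\<Sum>J | J \<subseteq> A. h (card J)) = (\<Sum>j\<le>card A. of_nat (card A choose j) * h j)"
proof -
  have "(\<Sum>J | J \<subseteq> A. h (card J))
      = (\<Sum>j\<in>{..card A}. \<Sum>J \<in> {x. x \<in> {J. J \<subseteq> A} \<and> card x = j}. h (card J))"
  proof (rule sum.group[symmetric])
    show "finite {J. J \<subseteq> A}" using fin by simp
    show "finite {..card A}" by simp
    show "card ` {J. J \<subseteq> A} \<subseteq> {..card A}" using fin card_mono by auto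
  qed
  also have "\<dots> = (\<Sum>j\<le>card A. of_nat (card A choose j) * h j)"
  proof (rule sum.cong[OF refl])
    fix j
    have "(\<Sum>J \<in> {x. x \<in> {J. J \<subseteq> A} \<and> card x = j}. h (card J))
        = (\<Sum>J \<in> {J. J \<subseteq> A \<and> card J = j}. h j)" by (rule sum.cong) auto
    also have "\<dots> = of_nat (card {J. J \<subseteq> A \<and> card J = j}) * h j" by simp
    also have "\<dots> = of_nat (card A choose j) * h j" using n_subsets[OF fin] by simp
    finally show "(\<Sum>J \<in> {x. x \<in> {J. J \<subseteq> A} \<and> card x = j}. h (card J))
        = of_nat (card A choose j) * h j" .
  qed
  finally show ?thesis .
qed

lemma forest_count:
  "finite V \<Longrightarrow> R \<subseteq> V \<Longrightarrow> of_nat (card {E. forest V E R}) = fcount (card V) (card R)"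
proof (induction "card V" arbitrary: V R rule: less_induct)
  case less
  have fin: "finite V" and RV: "R \<subseteq> V" by fact+
  show ?case
  proof (cases "R = {}")
    case True
    then show ?thesis using forest_empty_roots[OF fin] fin by (simp add: fcount_def)
  next
    case False
    then obtain r where r: "r \<in> R" by blast
    define N where "N = card V"
    define s where "s = card R"
    have finR: "finite R" using fin RV finite_subset by blast
    have s1: "1 \<le> s" using False finR by (simp add: s_def Suc_le_eq card_gt_0_iff)
    have sN: "s \<le> N" using card_mono[OF fin RV] by (simp add: s_def N_def)
    have cVR: "card (V - R) = N - s" using card_Diff_subset[OF finR RV] by (simp add: N_def s_def)
    have "r \<in> V" using r RV by auto
    then have cVr: "card (V - {r}) = N - 1" using fin by (simp add: N_def card_Diff_singleton)
    have dec: "card {E. forest V E R \<and> (\<lambda>_. True) {v. {r, v} \<in> E}} =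
         (\<Sum>J \<in> {J. J \<subseteq> V - R \<and> (\<lambda>_. True) J}. card {E'. forest (V - {r}) E' ((R - {r}) \<union> J)})"
      by (rule card_decomp[OF fin r RV])
    have "of_nat (card {E. forest V E R})
        = (\<Sum>J | J \<subseteq> V - R. (of_nat (card {E'. forest (V - {r}) E' ((R - {r}) \<union> J)}) :: rat))"
      using dec by simp
    also have "\<dots> = (\<Sum>J | J \<subseteq> V - R. fcount (N - 1) (s - 1 + card J))"
    proof (rule sum.cong[OF refl])
      fix J assume "J \<in> {J. J \<subseteq> V - R}"
      then have J: "J \<subseteq> V - R" by simp
      have lt: "card (V - {r}) < card V" using cVr s1 sN by (simp add: N_def)
      have sub: "(R - {r}) \<union> J \<subseteq> V - {r}" using J RV r by auto
      have "of_nat (card {E'. forest (V - {r}) E' ((R - {r}) \<union> J)})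
          = fcount (card (V - {r})) (card ((R - {r}) \<union> J))"
        using less.hyps[OF lt _ sub] fin by simp
      moreover have "card ((R - {r}) \<union> J) = s - 1 + card J"
      proof -
        have "finite J" using J fin finite_subset by blast
        moreover have "(R - {r}) \<inter> J = {}" using J by auto
        ultimately have "card ((R - {r}) \<union> J) = card (R - {r}) + card J"
          using finR by (simp add: card_Un_disjoint)
        then show ?thesis using r finR by (simp add: s_def)
      qed
      ultimately show "of_nat (card {E'. forest (V - {r}) E' ((R - {r}) \<union> J)})
          = fcount (N - 1) (s - 1 + card J)" using cVr by simp
    qed
    also have "\<dots> = (\<Sum>j\<le>N - s. of_nat (N - s choose j) * fcount (N - 1) (s - 1 + j))"
      using sum_pow_card[of "V - R" "\<lambda>c. fcount (N - 1) (s - 1 + c)"] fin cVR by simp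
    also have "\<dots> = fcount N s" by (rule fcount_rec[OF s1 sN])
    finally show ?thesis by (simp add: N_def s_def)
  qed
qed

lemma tree_iff_forest:
  assumes "i \<in> V"
  shows "is_tree V E \<longleftrightarrow> forest V E {i}"
proof -
  have "graph_connected V E \<longleftrightarrow> (\<forall>v\<in>V. (v, i) \<in> conn E)"
  proof
    assume "graph_connected V E"
    then show "\<forall>v\<in>V. (v, i) \<in> conn E" using assms
      by (auto simp: graph_connected_def conn_def)
  next
    assume a: "\<forall>v\<in>V. (v, i) \<in> conn E"
    have "(u, v) \<in> conn E" if "u \<in> V" "v \<in> V" for u v
    proof -
      have "(u, i) \<in> conn E" "(v, i) \<in> conn E" using a that by auto
      then show ?thesis by (rule conn_trans[OF _ conn_sym])
    qed
    then show "graph_connected V E" by (auto simp: graph_connected_def conn_def)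
  qed
  then show ?thesis using assms by (auto simp: is_tree_def forest_def)
qed



theorem mainTheorem4:
  fixes n i k :: nat
  assumes "n \<ge> 1" and "1 \<le> i" and "i \<le> n + 1"
  shows "(of_nat (card {E. is_tree {1..n+1} E \<and>
                          card {v \<in> root_children E i. v < i} = k}) :: rat)
         = of_nat ((i - 1) choose k) * (of_nat ((k + 1) * (n + 1)) - of_nat i)
           * (of_nat n) powi (int i - int k - 2) * (of_nat (n + 1)) powi (int n - int i)"
proof -
  note n1 = assms(1) and i1 = assms(2) and iN = assms(3)
  define V :: "nat set" where "V = {1..n+1}"
  have finV: "finite V" by (simp add: V_def)
  have iV: "i \<in> V" using i1 iN by (simp add: V_def)
  define P where "P = (\<lambda>J::nat set. card {v \<in> J. v < i} = k)"
  have seteq: "{E. is_tree {1..n+1} E \<and> card {v \<in> root_children E i. v < i} = k}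
      = {E. forest V E {i} \<and> P {v. {i, v} \<in> E}}"
    using tree_iff_forest[OF iV] by (auto simp: V_def P_def root_children_def)
  define T where "T = {J. J \<subseteq> V - {i} \<and> P J}"
  have dec: "card {E. forest V E {i} \<and> P {v. {i, v} \<in> E}}
      = (\<Sum>J \<in> T. card {E'. forest (V - {i}) E' (({i} - {i}) \<union> J)})"
    unfolding T_def by (rule card_decomp[OF finV _ ]) (use iV in auto)
  have cV: "card (V - {i}) = n" using iV finV by (simp add: V_def card_Diff_singleton)
  have step1: "(of_nat (card {E. forest V E {i} \<and> P {v. {i, v} \<in> E}}) :: rat)
      = (\<Sum>J \<in> T. fcount n (card J))"
  proof -
    have "(of_nat (card {E. forest V E {i} \<and> P {v. {i, v} \<in> E}}) :: rat)
        = (\<Sum>J \<in> T. of_nat (card {E'. forest (V - {i}) E' (({i} - {i}) \<union> J)}))"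
      using dec by simp
    also have "\<dots> = (\<Sum>J \<in> T. fcount n (card J))"
    proof (rule sum.cong[OF refl])
      fix J assume "J \<in> T"
      then have J: "J \<subseteq> V - {i}" by (simp add: T_def)
      have "finite (V - {i})" using finV by simp
      from forest_count[OF this, of J] J cV
      show "of_nat (card {E'. forest (V - {i}) E' (({i} - {i}) \<union> J)}) = fcount n (card J)"
        by simp
    qed
    finally show ?thesis .
  qed
  define Lo :: "nat set" where "Lo = {1..<i}"
  define Up :: "nat set" where "Up = {i+1..n+1}"
  define S where "S = {A. A \<subseteq> Lo \<and> card A = k} \<times> {B. B \<subseteq> Up}"
  have finLo: "finite Lo" and finUp: "finite Up" by (simp_all add: Lo_def Up_def)
  have cLo: "card Lo = i - 1" by (simp add: Lo_def)
  have cUp: "card Up = n + 1 - i" by (simp add: Up_def)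
  have VLU: "V - {i} = Lo \<union> Up" using iN by (auto simp: V_def Lo_def Up_def)
  have dLU: "Lo \<inter> Up = {}" by (auto simp: Lo_def Up_def)
  have lowJ: "{v \<in> J. v < i} = J \<inter> Lo" if "J \<subseteq> V" for J
    using that by (auto simp: V_def Lo_def)
  have bij: "bij_betw (\<lambda>(A, B). A \<union> B) S T"
  proof (rule bij_betw_byWitness[where f' = "\<lambda>J. (J \<inter> Lo, J \<inter> Up)"])
    show "\<forall>a\<in>S. ((\<lambda>J. (J \<inter> Lo, J \<inter> Up)) ((\<lambda>(A, B). A \<union> B) a)) = a"
      using dLU by (auto simp: S_def)
    show "\<forall>a'\<in>T. (\<lambda>(A, B). A \<union> B) ((\<lambda>J. (J \<inter> Lo, J \<inter> Up)) a') = a'"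
      using VLU by (auto simp: T_def)
    show "(\<lambda>(A, B). A \<union> B) ` S \<subseteq> T"
    proof
      fix J assume "J \<in> (\<lambda>(A, B). A \<union> B) ` S"
      then obtain A B where AB: "J = A \<union> B" "A \<subseteq> Lo" "card A = k" "B \<subseteq> Up"
        by (auto simp: S_def)
      have JV: "J \<subseteq> V - {i}" using AB VLU by auto
      have "J \<inter> Lo = A" using AB dLU by auto
      moreover have "J \<subseteq> V" using JV by auto
      ultimately have "{v \<in> J. v < i} = A" using lowJ[of J] by simp
      then have "P J" using AB by (simp add: P_def)
      then show "J \<in> T" using JV by (simp add: T_def)
    qed
    show "(\<lambda>J. (J \<inter> Lo, J \<inter> Up)) ` T \<subseteq> S"
    proof
      fix x assume "x \<in> (\<lambda>J. (J \<inter> Lo, J \<inter> Up)) ` T"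
      then obtain J where J: "x = (J \<inter> Lo, J \<inter> Up)" "J \<subseteq> V - {i}" "P J"
        by (auto simp: T_def)
      have "J \<subseteq> V" using J by auto
      then have "{v \<in> J. v < i} = J \<inter> Lo" by (rule lowJ)
      then have "card (J \<inter> Lo) = k" using J(3) by (simp add: P_def)
      then show "x \<in> S" using J by (auto simp: S_def)
    qed
  qed
  have "(\<Sum>J \<in> T. fcount n (card J)) = (\<Sum>x \<in> S. fcount n (card ((\<lambda>(A, B). A \<union> B) x)))"
    using sum.reindex_bij_betw[OF bij, of "\<lambda>J. fcount n (card J)"] by simp
  also have "\<dots> = (\<Sum>x \<in> S. fcount n (k + card (snd x)))"
  proof (rule sum.cong[OF refl])
    fix x assume "x \<in> S"
    then obtain A B where AB: "x = (A, B)" "A \<subseteq> Lo" "card A = k" "B \<subseteq> Up"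
      by (auto simp: S_def)
    have "finite A" "finite B" using AB finLo finUp finite_subset by blast+
    moreover have "A \<inter> B = {}" using AB dLU by auto
    ultimately have "card (A \<union> B) = k + card B" using AB by (simp add: card_Un_disjoint)
    then show "fcount n (card ((\<lambda>(A, B). A \<union> B) x)) = fcount n (k + card (snd x))"
      using AB by simp
  qed
  also have "\<dots> = (\<Sum>A \<in> {A. A \<subseteq> Lo \<and> card A = k}. \<Sum>B \<in> {B. B \<subseteq> Up}. fcount n (k + card B))"
  proof -
    have "(\<Sum>x \<in> S. fcount n (k + card (snd x))) = (\<Sum>(A, B) \<in> S. fcount n (k + card B))"
      by (simp add: case_prod_unfold)
    also have "\<dots> = (\<Sum>A \<in> {A. A \<subseteq> Lo \<and> card A = k}. \<Sum>B \<in> {B. B \<subseteq> Up}. fcount n (k + card B))"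
      unfolding S_def by (rule sum.cartesian_product[symmetric])
    finally show ?thesis .
  qed
  also have "\<dots> = of_nat (card {A. A \<subseteq> Lo \<and> card A = k}) * (\<Sum>B | B \<subseteq> Up. fcount n (k + card B))"
    by simp
  also have "\<dots> = of_nat ((i - 1) choose k) * (\<Sum>j\<le>n + 1 - i. of_nat (n + 1 - i choose j) * fcount n (k + j))"
    using n_subsets[OF finLo, of k] cLo sum_pow_card[OF finUp, of "\<lambda>c. fcount n (k + c)"] cUp by simp
  also have "\<dots> = of_nat ((i - 1) choose k) * ((of_nat ((k + 1) * (n + 1)) - of_nat i) * (of_nat n) powi (int i - int k - 2)
           * (of_nat (n + 1)) powi (int n - int i))"
    using main_alg[OF n1 i1 iN, of k] by simp
  finally show ?thesis using seteq step1 by (simp add: mult_ac)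
qed

end
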